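(* Let $1\le q<\infty$, $p=2q$, $\beta>-1/p$, $0<\delta<1/4$, and $\lambda>1$. Then there exists a function $f\in\mathbb B_p^{\beta,\beta}\cap\mathbb M_+^1$ such that \[ \Omega_\varphi^1(f,\delta)_{w_{\beta,\beta},q}\ge c\,\frac{\delta^{1/q}|\ln\delta|^{1/(2q)}}{|\ln|\ln\delta||^{\lambda/(2q)}}, \] where $c>0$ is independent of $\delta$.
   Context: For $x\in[-1,1]$, $\varphi(x)=\sqrt{1-x^2}$, $w_{\beta,\beta}(x)=(1-x^2)^\beta$; $\|\cdot\|_p$ is the $L_p[-1,1]$ norm, $\|g\|_{L_q(S)}$ the $L_q$ norm over $S$; $\mathbb B_p^{\beta,\beta}=\{f:\|w_{\beta,\beta}f\|_p=1\}$. $\Delta_h^1(f,x)=f(x+h/2)-f(x-h/2)$ if $x\pm h/2\in[-1,1]$, else $0$. For a weight $w$, $\Omega_\varphi^1(f,\delta)_{w,q}=\sup_{0<h\le\delta}\|w(x)\Delta^1_{h\varphi(x)}(f,x)\|_{L_q[-1+2h^2,1-2h^2]}$. $\mathbb M_+^1$ is the set of nondecreasing functions $f$ on $(-1,1)$ with $f(x)=0$ for $x\in(-1,0]$. *)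

theory Defs
  imports "HOL-Analysis.Analysis"
begin

definition phi :: "real \<Rightarrow> real" where
  "phi x = sqrt (1 - x\<^sup>2)"

definition wbb :: "real \<Rightarrow> real \<Rightarrow> real" where
  "wbb \<beta> x = (1 - x\<^sup>2) powr \<beta>"

text \<open>L_q norm over S (Lebesgue measure); an infinite integral is mapped to 0 by enn2real.\<close>
definition Lq_norm :: "real \<Rightarrow> real set \<Rightarrow> (real \<Rightarrow> real) \<Rightarrow> real" where
  "Lq_norm q S g = (enn2real (\<integral>\<^sup>+ x. indicator S x * ennreal (\<bar>g x\<bar> powr q) \<partial>lborel)) powr (1 / q)"

definition Delta1 :: "real \<Rightarrow> (real \<Rightarrow> real) \<Rightarrow> real \<Rightarrow> real" where
  "Delta1 h f x = (if -1 \<le> x - h / 2 \<and> x - h / 2 \<le> 1 \<and> -1 \<le> x + h / 2 \<and> x + h / 2 \<le> 1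
                   then f (x + h / 2) - f (x - h / 2) else 0)"

definition Omega1 :: "real \<Rightarrow> (real \<Rightarrow> real) \<Rightarrow> (real \<Rightarrow> real) \<Rightarrow> real \<Rightarrow> ereal" where
  "Omega1 q w f \<delta> = (SUP h\<in>{0<..\<delta>}.
      ereal (Lq_norm q {-1 + 2 * h\<^sup>2 .. 1 - 2 * h\<^sup>2} (\<lambda>x. w x * Delta1 (h * phi x) f x)))"

definition Bsphere :: "real \<Rightarrow> real \<Rightarrow> (real \<Rightarrow> real) set" where
  "Bsphere p \<beta> = {f. Lq_norm p {-1..1} (\<lambda>x. wbb \<beta> x * f x) = 1}"

definition Mplus1 :: "(real \<Rightarrow> real) set" where
  "Mplus1 = {f. mono_on {-1<..<1} f \<and> (\<forall>x\<in>{-1<..0}. f x = 0)}"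

end

theory Submission
  imports Defs
begin


definition tj :: "nat \<Rightarrow> real" where "tj j = 1 - 1 / 2 ^ j"
definition dj :: "real \<Rightarrow> nat \<Rightarrow> real" where
  "dj \<alpha> j = (2 ^ j) powr \<alpha> - (2 ^ (j - 1)) powr \<alpha>"
definition G :: "real \<Rightarrow> nat \<Rightarrow> real \<Rightarrow> real" where
  "G \<alpha> N x = (\<Sum>j\<in>{1..N}. dj \<alpha> j * (if tj j \<le> x then 1 else 0))"

lemma G_meas[measurable]: "G \<alpha> N \<in> borel_measurable borel"
  unfolding G_def by measurable

lemma wbb_meas[measurable]: "wbb \<beta> \<in> borel_measurable borel"
  unfolding wbb_def by measurable

lemma phi_meas[measurable]: "phi \<in> borel_measurable borel"
  unfolding phi_def by measurable

lemma Delta_meas[measurable]: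
  assumes [measurable]: "f \<in> borel_measurable borel" "g \<in> borel_measurable borel"
  shows "(\<lambda>x. Delta1 (g x) f x) \<in> borel_measurable borel"
  unfolding Delta1_def by measurable

lemma Lq_norm_div:
  assumes "c > 0" "q > 0" and [measurable]: "g \<in> borel_measurable borel" "S \<in> sets borel"
  shows "Lq_norm q S (\<lambda>x. g x / c) = Lq_norm q S g / c"
proof -
  have "(\<integral>\<^sup>+ x. indicator S x * ennreal (\<bar>g x / c\<bar> powr q) \<partial>lborel)
      = (\<integral>\<^sup>+ x. ennreal (c powr (-q)) * (indicator S x * ennreal (\<bar>g x\<bar> powr q)) \<partial>lborel)"
    apply (rule nn_integral_cong)
    using assms(1) by (auto simp: abs_divide powr_divide powr_minus divide_simps ennreal_mult'[symmetric] indicator_def)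
  also have "\<dots> = ennreal (c powr (-q)) * (\<integral>\<^sup>+ x. indicator S x * ennreal (\<bar>g x\<bar> powr q) \<partial>lborel)"
    by (rule nn_integral_cmult) measurable
  finally have e: "enn2real (\<integral>\<^sup>+ x. indicator S x * ennreal (\<bar>g x / c\<bar> powr q) \<partial>lborel)
     = c powr (-q) * enn2real (\<integral>\<^sup>+ x. indicator S x * ennreal (\<bar>g x\<bar> powr q) \<partial>lborel)"
    by (simp add: enn2real_mult)
  define X where "X = enn2real (\<integral>\<^sup>+ x. indicator S x * ennreal (\<bar>g x\<bar> powr q) \<partial>lborel)"
  have X: "X \<ge> 0" unfolding X_def by simp
  have "(c powr (-q) * X) powr (1/q) = X powr (1/q) / c"
  proof -
    have "(c powr (-q) * X) powr (1/q) = (c powr (-q)) powr (1/q) * X powr (1/q)"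
      using X assms by (simp add: powr_mult)
    also have "(c powr (-q)) powr (1/q) = c powr (-1)" using assms by (simp add: powr_powr)
    finally show ?thesis using assms by (simp add: powr_minus divide_simps)
  qed
  then show ?thesis unfolding Lq_norm_def e X_def[symmetric] by simp
qed

lemma Delta1_div: "Delta1 h (\<lambda>x. f x / c) x = Delta1 h f x / c"
  unfolding Delta1_def by (simp add: diff_divide_distrib)



lemma dj_nonneg: "\<alpha> > 0 \<Longrightarrow> dj \<alpha> j \<ge> 0"
  unfolding dj_def by (auto intro!: powr_mono2 simp: power_increasing)

lemma dj_eq: "\<alpha> > 0 \<Longrightarrow> j \<ge> 1 \<Longrightarrow> dj \<alpha> j = (2^j) powr \<alpha> * (1 - 2 powr (-\<alpha>))"
proof -
  assume a: "\<alpha> > 0" "j \<ge> 1"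
  have "(2::real)^j = 2^(j-1) * 2" using a by (cases j) auto
  then have e: "((2::real)^j) powr \<alpha> = (2^(j-1)) powr \<alpha> * 2 powr \<alpha>"
    by (simp add: powr_mult)
  have p: "(2::real) powr \<alpha> > 0" by simp
  show ?thesis unfolding dj_def e using p by (simp add: powr_minus divide_simps algebra_simps)
qed

lemma tj_ge: "j \<ge> 1 \<Longrightarrow> tj j \<ge> 1/2"
proof -
  assume "j \<ge> 1"
  then have "(2::real)^j \<ge> 2^1" by (intro power_increasing) auto
  then show ?thesis unfolding tj_def by (simp add: divide_simps)
qed

lemma tj_lt1: "tj j < 1" unfolding tj_def by simp

lemma G_nonneg: "\<alpha> > 0 \<Longrightarrow> G \<alpha> N x \<ge> 0"
  unfolding G_def by (auto intro!: sum_nonneg dj_nonneg)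

lemma G_mono: "\<alpha> > 0 \<Longrightarrow> x \<le> y \<Longrightarrow> G \<alpha> N x \<le> G \<alpha> N y"
  unfolding G_def by (intro sum_mono) (auto intro!: dj_nonneg)

lemma G_zero: "x < 1/2 \<Longrightarrow> G \<alpha> N x = 0"
  unfolding G_def using tj_ge by (intro sum.neutral) force

lemma G_ind_bound:
  assumes "\<alpha> > 0" "R \<ge> 1"
  shows "(\<Sum>j\<in>{1..N}. dj \<alpha> j * (if 2^j \<le> R then 1 else 0)) \<le> min R (2^N) powr \<alpha> - 1"
proof (induction N)
  case 0
  then show ?case using assms by simp
next
  case (Suc N)
  have ss: "(\<Sum>j\<in>{1..Suc N}. dj \<alpha> j * (if 2^j \<le> R then 1 else 0)) =
     (\<Sum>j\<in>{1..N}. dj \<alpha> j * (if 2^j \<le> R then 1 else 0)) + dj \<alpha> (Suc N) * (if 2^Suc N \<le> R then 1 else 0)"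
    by (simp add: sum.cl_ivl_Suc)
  show ?case
  proof (cases "2^Suc N \<le> R")
    case True
    then have "(2::real)^N \<le> R" by (smt (verit) power_increasing_iff  lessI less_imp_le one_le_numeral)
    then have "min R (2^N) = 2^N" by simp
    moreover have "min R (2^Suc N) = 2^Suc N" using True by simp
    ultimately show ?thesis using Suc True unfolding ss dj_def by simp
  next
    case False
    have "min R (2^N) powr \<alpha> \<le> min R (2^Suc N) powr \<alpha>"
      using assms by (intro powr_mono2) (auto simp: min_def)
    then show ?thesis using Suc False unfolding ss by simp
  qed
qed

lemma tj_le_iff: "x < 1 \<Longrightarrow> (tj j \<le> x) = (2^j \<le> 1/(1-x))"
  unfolding tj_def by (auto simp: divide_simps algebra_simps)

lemma G_le_R: assumes "\<alpha> > 0" "0 \<le> x" "x < 1"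
  shows "G \<alpha> N x \<le> min (1/(1-x)) (2^N) powr \<alpha>"
proof -
  have "G \<alpha> N x = (\<Sum>j\<in>{1..N}. dj \<alpha> j * (if 2^j \<le> 1/(1-x) then 1 else 0))"
    unfolding G_def using tj_le_iff[OF assms(3)] by simp
  also have "\<dots> \<le> min (1/(1-x)) (2^N) powr \<alpha> - 1"
    using assms by (intro G_ind_bound) (auto simp: divide_simps)
  finally show ?thesis by simp
qed

lemma G_le_max: assumes "\<alpha> > 0"
  shows "G \<alpha> N x \<le> (2^N) powr \<alpha>"
proof -
  have "G \<alpha> N x \<le> (\<Sum>j\<in>{1..N}. dj \<alpha> j * (if 2^j \<le> (2::real)^N then 1 else 0))"
    unfolding G_def using assms
    by (intro sum_mono) (auto intro!: dj_nonneg mult_left_mono simp: power_increasing)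
  also have "\<dots> \<le> min (2^N) (2^N) powr \<alpha> - 1"
    using assms by (intro G_ind_bound) auto
  finally show ?thesis by simp
qed




lemma int_inv: fixes a b :: real assumes "a \<le> b" "b < 1"
  shows "((\<lambda>x. 1/(1-x)) has_integral (ln(1-a) - ln(1-b))) {a..b}"
proof -
  have "((\<lambda>x. 1/(1-x)) has_integral ((\<lambda>x. - ln (1-x)) b - (\<lambda>x. - ln(1-x)) a)) {a..b}"
  proof (rule fundamental_theorem_of_calculus[OF assms(1)])
    fix x assume x: "x \<in> {a..b}"
    then have "x < 1" using assms by auto
    have "((\<lambda>x. - ln (1-x)) has_real_derivative (1/(1-x))) (at x within {a..b})"
      using \<open>x < 1\<close> by (auto intro!: derivative_eq_intros simp: divide_simps)
    then show "((\<lambda>x. - ln (1-x)) has_vector_derivative (1/(1-x))) (at x within {a..b})"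
      by (simp add: has_real_derivative_iff_has_vector_derivative)
  qed
  then show ?thesis by simp
qed

lemma int_pow: fixes a \<gamma> :: real assumes "a \<le> 1" "\<gamma> > -1"
  shows "((\<lambda>x. (1-x) powr \<gamma>) has_integral ((1-a) powr (\<gamma>+1) / (\<gamma>+1))) {a..1}"
proof -
  let ?F = "\<lambda>x. - ((1-x) powr (\<gamma>+1) / (\<gamma>+1))"
  have "((\<lambda>x. (1-x) powr \<gamma>) has_integral (?F 1 - ?F a)) {a..1}"
  proof (rule fundamental_theorem_of_calculus_interior[OF assms(1)])
    show "continuous_on {a..1} ?F"
      using assms by (intro continuous_intros continuous_on_powr') auto
  next
    fix x assume x: "x \<in> {a<..<1}"
    have "(?F has_real_derivative ((1-x) powr \<gamma>)) (at x)"
      using x assms by (auto intro!: derivative_eq_intros simp: divide_simps)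
    then show "(?F has_vector_derivative ((1-x) powr \<gamma>)) (at x)"
      by (simp add: has_real_derivative_iff_has_vector_derivative)
  qed
  then show ?thesis using assms by simp
qed



definition V :: "real \<Rightarrow> nat \<Rightarrow> real \<Rightarrow> real \<Rightarrow> real" where
  "V \<gamma> N K x = K * (if x < 1 - 1/2^N then 1/(1-x) else (2^N) powr (\<gamma>+1) * (1-x) powr \<gamma>)"

lemma V_int: assumes "\<gamma> > -1" "N \<ge> 1"
  shows "(V \<gamma> N K has_integral (K * ((real N - 1) * ln 2 + 1/(\<gamma>+1)))) {1/2..1}"
proof -
  define m :: real where "m = 1 - 1/2^N"
  have "(2::real)^N \<ge> 2^1" using assms by (intro power_increasing) auto
  then have m: "1/2 \<le> m" "m < 1" unfolding m_def by (auto simp: divide_simps)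
  have "((\<lambda>x. 1/(1-x)) has_integral (ln(1-1/2) - ln(1-m))) {1/2..m}"
    by (rule int_inv) (use m in auto)
  moreover have "ln(1-1/2) - ln(1-m) = (real N - 1) * ln 2"
    unfolding m_def by (simp add: ln_div ln_realpow algebra_simps)
  ultimately have A0: "((\<lambda>x. K * (1/(1-x))) has_integral (K * ((real N - 1) * ln 2))) {1/2..m}"
    by (metis has_integral_mult_right)
  have A: "(V \<gamma> N K has_integral (K * ((real N - 1) * ln 2))) {1/2..m}"
    by (rule has_integral_spike_finite[where S="{m}", OF _ _ A0]) (auto simp: V_def m_def)
  have "((\<lambda>x. (1-x) powr \<gamma>) has_integral ((1-m) powr (\<gamma>+1) / (\<gamma>+1))) {m..1}"
    by (rule int_pow) (use m assms in auto)
  then have "((\<lambda>x. K * ((2^N) powr (\<gamma>+1) * (1-x) powr \<gamma>)) has_integral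
      (K * ((2^N) powr (\<gamma>+1) * ((1-m) powr (\<gamma>+1) / (\<gamma>+1))))) {m..1}"
    by (intro has_integral_mult_right)
  moreover have "(2^N) powr (\<gamma>+1) * (1-m) powr (\<gamma>+1) = 1"
    unfolding m_def by (simp add: powr_mult[symmetric])
  ultimately have B0: "((\<lambda>x. K * ((2^N) powr (\<gamma>+1) * (1-x) powr \<gamma>)) has_integral (K / (\<gamma>+1))) {m..1}"
    by (simp add: divide_simps)
  have B: "(V \<gamma> N K has_integral (K / (\<gamma>+1))) {m..1}"
    by (rule has_integral_spike_finite[where S="{}", OF _ _ B0]) (auto simp: V_def m_def)
  have "(V \<gamma> N K has_integral (K * ((real N - 1) * ln 2) + K / (\<gamma>+1))) {1/2..1}"
    by (rule has_integral_combine[OF m(1) _ A B]) (use m in auto)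
  then show ?thesis by (simp add: algebra_simps)
qed



lemma powr_between:
  fixes a b u c :: real
  assumes "0 < a" "a \<le> u" "u \<le> b"
  shows "min (a powr c) (b powr c) \<le> u powr c" "u powr c \<le> max (a powr c) (b powr c)"
proof -
  have "(c \<ge> 0 \<longrightarrow> a powr c \<le> u powr c \<and> u powr c \<le> b powr c) \<and>
        (c < 0 \<longrightarrow> b powr c \<le> u powr c \<and> u powr c \<le> a powr c)"
    using assms by (auto intro: powr_mono2 powr_mono2')
  then show "min (a powr c) (b powr c) \<le> u powr c" "u powr c \<le> max (a powr c) (b powr c)"
    by (cases "c \<ge> 0"; auto)+
qed

lemma pt_upper:
  fixes q \<beta> :: real
  assumes q: "q \<ge> 1" and b: "\<beta> > -1/(2*q)" and N: "N \<ge> 1"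
    and x: "1/2 \<le> x" "x < 1"
  shows "\<bar>wbb \<beta> x * G (\<beta> + 1/(2*q)) N x\<bar> powr (2*q)
         \<le> V (2*q*\<beta>) N (max 1 (2 powr (2*q*\<beta>))) x"
proof -
  define \<alpha> where "\<alpha> = \<beta> + 1/(2*q)"
  define \<gamma> where "\<gamma> = 2*q*\<beta>"
  define K where "K = max 1 (2 powr \<gamma>)"
  have qp: "q > 0" using q by simp
  have al: "\<alpha> > 0" unfolding \<alpha>_def using b by simp
  have ga: "\<alpha> * (2*q) = \<gamma> + 1" unfolding \<alpha>_def \<gamma>_def using qp by (simp add: algebra_simps)
  have x1: "1 - x > 0" using x by simp
  have w: "wbb \<beta> x \<ge> 0" unfolding wbb_def by simp
  have g: "G \<alpha> N x \<ge> 0" using G_nonneg al by simp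
  have "\<bar>wbb \<beta> x * G \<alpha> N x\<bar> powr (2*q) = wbb \<beta> x powr (2*q) * G \<alpha> N x powr (2*q)"
    using w g by (simp add: powr_mult)
  also have "wbb \<beta> x powr (2*q) = (1-x) powr \<gamma> * (1+x) powr \<gamma>"
  proof -
    have "wbb \<beta> x powr (2*q) = (1-x^2) powr \<gamma>"
      unfolding wbb_def \<gamma>_def using x by (simp add: powr_powr mult.commute)
    also have "1 - x^2 = (1-x)*(1+x)" by (simp add: power2_eq_square algebra_simps)
    finally show ?thesis using x by (simp add: powr_mult)
  qed
  also have "(1+x) powr \<gamma> \<le> K"
    using powr_between(2)[of 1 "1+x" 2 \<gamma>] x unfolding K_def by auto
  finally have s1: "\<bar>wbb \<beta> x * G \<alpha> N x\<bar> powr (2*q) \<le> (1-x) powr \<gamma> * K * G \<alpha> N x powr (2*q)"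
    using x g by (simp add: mult_left_mono mult_right_mono mult.assoc mult.commute mult.left_commute)
  have "G \<alpha> N x powr (2*q) \<le> (min (1/(1-x)) (2^N) powr \<alpha>) powr (2*q)"
    using G_le_R[OF al, of x N] x g qp by (intro powr_mono2) auto
  also have "\<dots> = min (1/(1-x)) (2^N) powr (\<gamma>+1)"
    using ga by (simp add: powr_powr)
  finally have s2: "G \<alpha> N x powr (2*q) \<le> min (1/(1-x)) (2^N) powr (\<gamma>+1)" .
  have K0: "K \<ge> 0" unfolding K_def by simp
  have s3: "\<bar>wbb \<beta> x * G \<alpha> N x\<bar> powr (2*q) \<le> (1-x) powr \<gamma> * K * min (1/(1-x)) (2^N) powr (\<gamma>+1)"
    using s1 s2 K0 by (smt (verit, best) mult_left_mono powr_ge_zero zero_le_mult_iff)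
  show ?thesis
  proof (cases "x < 1 - 1/2^N")
    case True
    then have "1/(1-x) < 2^N" using x1 by (auto simp: divide_simps algebra_simps)
    then have "min (1/(1-x)) (2^N) = 1/(1-x)" by simp
    moreover have "(1-x) powr \<gamma> * (1/(1-x)) powr (\<gamma>+1) = 1/(1-x)"
      using x1 by (simp add: powr_divide powr_add divide_simps)
    ultimately show ?thesis using s3 True unfolding V_def \<alpha>_def[symmetric] \<gamma>_def[symmetric] K_def[symmetric]
      by (simp add: algebra_simps)
  next
    case False
    have "min (1/(1-x)) (2^N) powr (\<gamma>+1) \<le> (2^N) powr (\<gamma>+1)"
      using x1 ga al qp by (intro powr_mono2) (auto simp: min_def simp del: ga intro!: mult_nonneg_nonneg[of \<alpha> "2*q", unfolded ga])
    then have "(1-x) powr \<gamma> * K * min (1/(1-x)) (2^N) powr (\<gamma>+1) \<le> (1-x) powr \<gamma> * K * (2^N) powr (\<gamma>+1)"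
      using K0 by (intro mult_left_mono) auto
    then show ?thesis using s3 False unfolding V_def \<alpha>_def[symmetric] \<gamma>_def[symmetric] K_def[symmetric]
      by (simp add: algebra_simps)
  qed
qed



lemma V_nonneg: "K \<ge> 0 \<Longrightarrow> x \<le> 1 \<Longrightarrow> V \<gamma> N K x \<ge> 0"
  unfolding V_def by (auto intro!: mult_nonneg_nonneg simp: divide_simps)

lemma norm_upper:
  fixes q \<beta> :: real
  assumes q: "q \<ge> 1" and b: "\<beta> > -1/(2*q)" and N: "N \<ge> 1"
  shows "(\<integral>\<^sup>+ x. indicator {-1..1} x * ennreal (\<bar>wbb \<beta> x * G (\<beta> + 1/(2*q)) N x\<bar> powr (2*q)) \<partial>lborel)
     \<le> ennreal (max 1 (2 powr (2*q*\<beta>)) * ((real N - 1) * ln 2 + 1/(2*q*\<beta>+1)))"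
proof -
  define K where "K = max 1 (2 powr (2*q*\<beta>))"
  have K0: "K \<ge> 0" unfolding K_def by simp
  have ga: "2*q*\<beta> > -1" using b q by (simp add: divide_simps mult.commute)
  have "(\<integral>\<^sup>+ x. indicator {-1..1} x * ennreal (\<bar>wbb \<beta> x * G (\<beta> + 1/(2*q)) N x\<bar> powr (2*q)) \<partial>lborel)
     \<le> (\<integral>\<^sup>+ x. ennreal (V (2*q*\<beta>) N K x) * indicator {1/2..1} x \<partial>lborel)"
  proof (rule nn_integral_mono)
    fix x :: real
    show "indicator {-1..1} x * ennreal (\<bar>wbb \<beta> x * G (\<beta> + 1/(2*q)) N x\<bar> powr (2*q))
       \<le> ennreal (V (2*q*\<beta>) N K x) * indicator {1/2..1} x"
    proof (cases "1/2 \<le> x \<and> x < 1")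
      case True
      then show ?thesis using pt_upper[OF q b N, of x] unfolding K_def
        by (auto simp: indicator_def intro!: ennreal_leI)
    next
      case False
      then consider "x < 1/2" | "x = 1" | "x > 1" by linarith
      then show ?thesis
      proof cases
        case 1 then show ?thesis by (simp add: G_zero)
      next
        case 2 then show ?thesis by (simp add: wbb_def)
      qed (simp add: indicator_def)
    qed
  qed
  also have "\<dots> = ennreal (K * ((real N - 1) * ln 2 + 1/(2*q*\<beta>+1)))"
    using V_int[OF ga N, of K] V_nonneg[OF K0]
    by (intro nn_integral_has_integral_lebesgue') auto
  finally show ?thesis unfolding K_def .
qed

lemma norm_pos:
  fixes q \<beta> :: real
  assumes q: "q \<ge> 1" and b: "\<beta> > -1/(2*q)" and N: "N \<ge> 1"
  shows "(\<integral>\<^sup>+ x. indicator {-1..1} x * ennreal (\<bar>wbb \<beta> x * G (\<beta> + 1/(2*q)) N x\<bar> powr (2*q)) \<partial>lborel)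
     \<ge> ennreal (((min ((1/4) powr \<beta>) 1 * dj (\<beta> + 1/(2*q)) 1) powr (2*q)) * (1/4))"
proof -
  define \<alpha> where "\<alpha> = \<beta> + 1/(2*q)"
  define c where "c = (min ((1/4) powr \<beta>) 1 * dj \<alpha> 1) powr (2*q)"
  have al: "\<alpha> > 0" unfolding \<alpha>_def using b by simp
  have c0: "c \<ge> 0" unfolding c_def by simp
  have "ennreal (c * (1/4)) = (\<integral>\<^sup>+ x. ennreal c * indicator {1/2..3/4::real} x \<partial>lborel)"
    by (subst nn_integral_cmult_indicator) (use c0 in \<open>auto simp: ennreal_mult[symmetric]\<close>)
  also have "\<dots> \<le> (\<integral>\<^sup>+ x. indicator {-1..1} x * ennreal (\<bar>wbb \<beta> x * G \<alpha> N x\<bar> powr (2*q)) \<partial>lborel)"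
  proof (rule nn_integral_mono)
    fix x :: real
    show "ennreal c * indicator {1/2..3/4} x \<le> indicator {-1..1} x * ennreal (\<bar>wbb \<beta> x * G \<alpha> N x\<bar> powr (2*q))"
    proof (cases "x \<in> {1/2..3/4}")
      case True
      have "x*x \<le> (3/4)*(3/4)" using True by (intro mult_mono) auto
      then have u: "1/4 \<le> 1 - x^2" "1 - x^2 \<le> 1" by (auto simp: power2_eq_square)
      have w: "min ((1/4) powr \<beta>) (1 powr \<beta>) \<le> wbb \<beta> x" unfolding wbb_def
        by (rule powr_between(1)) (use u in auto)
      have d: "dj \<alpha> 1 \<le> G \<alpha> N x"
      proof -
        have "dj \<alpha> 1 = dj \<alpha> 1 * (if tj 1 \<le> x then 1 else 0)" using True by (simp add: tj_def)
        also have "\<dots> \<le> G \<alpha> N x" unfolding G_def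
          by (rule member_le_sum[of 1 "{1..N}" "\<lambda>j. dj \<alpha> j * (if tj j \<le> x then 1 else 0)"])
            (use N al dj_nonneg in auto)
        finally show ?thesis .
      qed
      have d0: "dj \<alpha> 1 \<ge> 0" using dj_nonneg al by simp
      have m0: "min ((1/4) powr \<beta>) 1 \<ge> 0" by simp
      have "min ((1/4) powr \<beta>) 1 * dj \<alpha> 1 \<le> \<bar>wbb \<beta> x * G \<alpha> N x\<bar>"
        using w d d0 m0 by (simp add: abs_mult mult_mono)
      then have "c \<le> \<bar>wbb \<beta> x * G \<alpha> N x\<bar> powr (2*q)" unfolding c_def
        using q m0 d0 by (intro powr_mono2) auto
      then show ?thesis using True by (auto simp: indicator_def intro!: ennreal_leI)
    qed simp
  qed
  finally show ?thesis unfolding c_def \<alpha>_def by (simp add: mult.commute)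
qed



definition ell :: "real \<Rightarrow> nat \<Rightarrow> real" where "ell h k = h/2 * sqrt (1/2^(k+1))"

lemma window:
  fixes h x :: real
  assumes h: "0 < h" and k: "1 \<le> k" and hk: "(2::real)^k * (4*h^2) \<le> 1"
    and x: "tj k \<le> x" "x < tj k + ell h k"
  shows "x \<in> {-1 + 2*h^2 .. 1 - 2*h^2}" "1/2 \<le> x" "x < 1"
    "1/2^(k+1) \<le> 1 - x^2" "1 - x^2 \<le> 2/2^k"
    "-1 \<le> x - h * phi x / 2" "x - h * phi x / 2 < tj k" "tj k \<le> x + h * phi x / 2" "x + h * phi x / 2 \<le> 1"
proof -
  have p2: "(2::real)^(k+1) = 2 * 2^k" by simp
  have pk: "(2::real)^k \<ge> 2" using k by (metis power_increasing power_one_right one_le_numeral)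
  have "2 * (4*h^2) \<le> (2::real)^k * (4*h^2)" by (rule mult_right_mono[OF pk]) simp
  then have hh: "h^2 \<le> 1/8" using hk by linarith
  have h1: "h \<le> 1/2"
  proof (rule ccontr)
    assume "\<not> h \<le> 1/2"
    then have "(1/2)*(1/2) \<le> h*h" by (intro mult_mono) auto
    then show False using hh by (simp add: power2_eq_square)
  qed
  have l1: "ell h k \<le> 1/2^(k+1)"
  proof -
    have "h/2 \<le> sqrt (1/2^(k+1))"
    proof (rule real_le_rsqrt)
      show "(h/2)^2 \<le> 1/2^(k+1)" using hk by (simp add: power_divide divide_simps p2 algebra_simps)
    qed
    then have "h/2 * sqrt (1/2^(k+1)) \<le> sqrt (1/2^(k+1)) * sqrt (1/2^(k+1))"
      by (intro mult_right_mono) auto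
    then show ?thesis unfolding ell_def by simp
  qed
  define s where "s = 1 - x"
  have tk: "tj k = 1 - 1/2^k" unfolding tj_def ..
  have s1: "1/2^(k+1) \<le> s" "s \<le> 1/2^k"
  proof -
    have e: "(1::real)/2^(k+1) = (1/2^k)/2" by (simp add: p2)
    show "s \<le> 1/2^k" using x(1) tk unfolding s_def by linarith
    show "1/2^(k+1) \<le> s" using x(2) tk l1 unfolding s_def e by linarith
  qed
  have "1/2^(k+1) \<ge> 2*h^2" using hk by (simp add: divide_simps p2 algebra_simps)
  then have s2: "2*h^2 \<le> s" using s1 by linarith
  have "1/2^k \<le> (1::real)/2" using pk by (simp add: divide_simps)
  then have s3: "s \<le> 1/2" using s1 by linarith
  have s0: "s > 0" using s1 by (smt (verit) divide_pos_pos zero_less_power)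
  show "1/2 \<le> x" "x < 1" using s3 s0 unfolding s_def by auto
  show "x \<in> {-1 + 2*h^2 .. 1 - 2*h^2}" using s2 s3 hh unfolding s_def by auto
  have xx: "1 - x^2 = s * (2 - s)" unfolding s_def by (simp add: power2_eq_square algebra_simps)
  have xs1: "s \<le> 1 - x^2" "1 - x^2 \<le> 2 * s" unfolding xx using s0 s3 by (auto simp: algebra_simps)
  show "1/2^(k+1) \<le> 1 - x^2" using xs1 s1 by linarith
  have "2 * s \<le> 2 * (1/2^k)" using s1 by simp
  then show "1 - x^2 \<le> 2/2^k" using xs1 by simp
  have ph0: "phi x \<ge> 0" unfolding phi_def using xs1 s0 by simp
  have ph1: "phi x \<le> 1" unfolding phi_def using xs1 s0 by (simp add: power2_eq_square)
  have ph2: "sqrt (1/2^(k+1)) \<le> phi x" unfolding phi_def using xs1 s1 by simp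
  have ph3: "h * phi x / 2 \<le> s"
  proof -
    have "phi x \<le> 2 * s/h" unfolding phi_def
    proof (rule real_le_lsqrt)
      show "0 \<le> 2 * s/h" using s0 h by simp
      have "2 * s*h^2 \<le> 2 * s*(2 * s)" using s2 s0 by (intro mult_left_mono) auto
      then have "2 * s \<le> (2 * s/h)^2" using h by (simp add: power_divide divide_simps power2_eq_square algebra_simps)
      then show "1 - x^2 \<le> (2 * s/h)^2" using xs1 by linarith
    qed
    then show ?thesis using h by (simp add: divide_simps mult.commute)
  qed
  show "x + h * phi x / 2 \<le> 1" using ph3 unfolding s_def by simp
  have "h * phi x \<le> 1/2 * 1" using h1 ph1 ph0 h by (intro mult_mono) auto
  then have "h * phi x / 2 \<le> 1/4" by simp
  then show "-1 \<le> x - h * phi x / 2" using s3 unfolding s_def by simp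
  have "h * phi x \<ge> 0" using ph0 h by simp
  then show "tj k \<le> x + h * phi x / 2" using x by linarith
  have "ell h k \<le> h * phi x / 2" unfolding ell_def using ph2 h by (simp add: divide_simps)
  then show "x - h * phi x / 2 < tj k" using x by simp
qed

lemma window_Delta:
  fixes h x :: real
  assumes h: "0 < h" and k: "1 \<le> k" "k \<le> N" and hk: "(2::real)^k * (4*h^2) \<le> 1"
    and x: "tj k \<le> x" "x < tj k + ell h k" and al: "\<alpha> > 0"
  shows "dj \<alpha> k \<le> Delta1 (h * phi x) (G \<alpha> N) x"
proof -
  note W = window[OF h k(1) hk x]
  have ph: "h * phi x / 2 \<ge> 0" using W(7,8) by linarith
  have eq: "Delta1 (h * phi x) (G \<alpha> N) x = G \<alpha> N (x + h * phi x / 2) - G \<alpha> N (x - h * phi x / 2)"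
    unfolding Delta1_def using W(6,9) ph by auto
  have "G \<alpha> N (x + h * phi x / 2) - G \<alpha> N (x - h * phi x / 2)
      = (\<Sum>j\<in>{1..N}. dj \<alpha> j * ((if tj j \<le> x + h * phi x / 2 then 1 else 0) - (if tj j \<le> x - h * phi x / 2 then 1 else 0)))"
    unfolding G_def by (simp add: sum_subtractf[symmetric] algebra_simps)
  also have "\<dots> \<ge> dj \<alpha> k * ((if tj k \<le> x + h * phi x / 2 then 1 else 0) - (if tj k \<le> x - h * phi x / 2 then 1 else 0))"
    by (rule member_le_sum) (use k ph al dj_nonneg in auto)
  finally show ?thesis using eq W(7,8) by simp
qed



lemma ell_le: assumes "0 < h" "(2::real)^k * (4*h^2) \<le> 1"
  shows "ell h k \<le> 1/2^(k+1)"
proof -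
  have p2: "(2::real)^(k+1) = 2 * 2^k" by simp
  have "h/2 \<le> sqrt (1/2^(k+1))"
  proof (rule real_le_rsqrt)
    show "(h/2)^2 \<le> 1/2^(k+1)" using assms by (simp add: power_divide divide_simps p2 algebra_simps)
  qed
  then have "h/2 * sqrt (1/2^(k+1)) \<le> sqrt (1/2^(k+1)) * sqrt (1/2^(k+1))"
    by (intro mult_right_mono) auto
  then show ?thesis unfolding ell_def by simp
qed

lemma tj_Suc: "tj j + 1/2^(j+1) = tj (Suc j)" unfolding tj_def by (simp add: divide_simps)

lemma tj_mono: "i \<le> j \<Longrightarrow> tj i \<le> tj j"
proof -
  assume "i \<le> j"
  then have "(2::real)^i \<le> 2^j" by (intro power_increasing) auto
  then have "1/(2::real)^j \<le> 1/2^i" by (intro divide_left_mono) auto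
  then show ?thesis unfolding tj_def by simp
qed

lemma windows_disj:
  assumes h: "0 < h" and hj: "(2::real)^j * (4*h^2) \<le> 1" and hk: "(2::real)^k * (4*h^2) \<le> 1"
    and jk: "j \<noteq> k" and x: "tj k \<le> x" "x < tj k + ell h k"
  shows "\<not> (tj j \<le> x \<and> x < tj j + ell h j)"
proof (cases "j < k")
  case True
  have "tj j + ell h j \<le> tj (Suc j)" using ell_le[OF h hj] tj_Suc[of j] by linarith
  also have "\<dots> \<le> tj k" using True by (intro tj_mono) auto
  finally show ?thesis using x by auto
next
  case False
  then have "k < j" using jk by auto
  have "tj k + ell h k \<le> tj (Suc k)" using ell_le[OF h hk] tj_Suc[of k] by linarith
  also have "\<dots> \<le> tj j" using \<open>k < j\<close> by (intro tj_mono) auto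
  finally show ?thesis using x by auto
qed

lemma val_bound:
  fixes q \<beta> h x :: real
  assumes q: "q \<ge> 1" and b: "\<beta> > -1/(2*q)" and h: "0 < h"
    and k: "1 \<le> k" "k \<le> N" and hk: "(2::real)^k * (4*h^2) \<le> 1"
    and x: "tj k \<le> x" "x < tj k + ell h k"
  shows "sqrt (2^k) * (min (2 powr (-\<beta>)) (2 powr \<beta>) * (1 - 2 powr (-(\<beta> + 1/(2*q))))) powr q
     \<le> \<bar>wbb \<beta> x * Delta1 (h * phi x) (G (\<beta> + 1/(2*q)) N) x\<bar> powr q"
proof -
  define \<alpha> where "\<alpha> = \<beta> + 1/(2*q)"
  define m where "m = min (2 powr (-\<beta>)) (2 powr (\<beta>::real))"
  define e where "e = 1 - 2 powr (-\<alpha>)"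
  have al: "\<alpha> > 0" unfolding \<alpha>_def using b by simp
  have e0: "e > 0" unfolding e_def using al by (simp add: powr_minus divide_simps)
  have m0: "m > 0" unfolding m_def by simp
  have qp: "q > 0" using q by simp
  note W = window[OF h k(1) hk x]
  have pk: "(2::real)^k = 2 powr (real k)" by (simp add: powr_realpow)
  have A: "2 powr (- real k * \<beta>) * m \<le> wbb \<beta> x"
  proof -
    have "min ((1/2^(k+1)) powr \<beta>) ((2/2^k) powr \<beta>) \<le> wbb \<beta> x"
      unfolding wbb_def by (rule powr_between(1)) (use W(4,5) in auto)
    moreover have "(1/2^(k+1)) powr \<beta> = 2 powr (- real k * \<beta>) * 2 powr (-\<beta>)"
    proof -
      have "(1::real)/2^(k+1) = 2 powr (- real k - 1)" by (simp add: powr_diff powr_minus powr_realpow divide_simps)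
      then have "(1/2^(k+1)) powr \<beta> = 2 powr ((- real k - 1) * \<beta>)" by (simp add: powr_powr)
      also have "(- real k - 1) * \<beta> = - real k * \<beta> + (-\<beta>)" by (simp add: algebra_simps)
      finally show ?thesis by (simp only: powr_add)
    qed
    moreover have "(2/2^k) powr \<beta> = 2 powr (- real k * \<beta>) * 2 powr \<beta>"
    proof -
      have "(2::real)/2^k = 2 powr (1 - real k)" by (simp add: powr_diff powr_realpow)
      then have "(2/2^k) powr \<beta> = 2 powr ((1 - real k) * \<beta>)" by (simp add: powr_powr)
      also have "(1 - real k) * \<beta> = - real k * \<beta> + \<beta>" by (simp add: algebra_simps)
      finally show ?thesis by (simp only: powr_add)
    qed
    ultimately show ?thesis unfolding m_def by (simp add: min_mult_distrib_left)
  qed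
  have B: "dj \<alpha> k * 1 \<le> Delta1 (h * phi x) (G \<alpha> N) x"
    using window_Delta[OF h k hk x al] by simp
  have dk: "dj \<alpha> k = 2 powr (real k * \<alpha>) * e"
    unfolding dj_eq[OF al k(1)] e_def pk by (simp add: powr_powr)
  have AB: "2 powr (- real k * \<beta>) * m * (2 powr (real k * \<alpha>) * e) \<le> \<bar>wbb \<beta> x * Delta1 (h * phi x) (G \<alpha> N) x\<bar>"
    using A B m0 e0 dk by (smt (verit) abs_mult mult_mono powr_ge_zero zero_le_mult_iff)
  have eq: "2 powr (- real k * \<beta>) * m * (2 powr (real k * \<alpha>) * e) = 2 powr (real k / (2*q)) * (m * e)"
  proof -
    have "2 powr (- real k * \<beta>) * 2 powr (real k * \<alpha>) = (2::real) powr (real k / (2*q))"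
      unfolding powr_add[symmetric] \<alpha>_def by (simp add: algebra_simps)
    then show ?thesis by (metis mult.assoc mult.left_commute)
  qed
  have sq: "sqrt (2^k) = 2 powr (real k / 2)"
  proof -
    have "sqrt (2^k) = (2 powr (real k)) powr (1/2)" unfolding pk by (simp add: powr_half_sqrt)
    then show ?thesis by (simp add: powr_powr)
  qed
  have "(2 powr (real k / (2*q)) * (m * e)) powr q = (2 powr (real k / (2*q))) powr q * (m*e) powr q"
    using m0 e0 by (simp add: powr_mult)
  also have "(2 powr (real k / (2*q))) powr q = sqrt (2^k)"
    unfolding sq using qp by (simp add: powr_powr)
  finally have "(2 powr (real k / (2*q)) * (m * e)) powr q = sqrt (2^k) * (m*e) powr q" .
  moreover have "(2 powr (real k / (2*q)) * (m * e)) powr q \<le> \<bar>wbb \<beta> x * Delta1 (h * phi x) (G \<alpha> N) x\<bar> powr q"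
    using AB[unfolded eq] m0 e0 qp by (intro powr_mono2) auto
  ultimately show ?thesis unfolding m_def e_def \<alpha>_def by simp
qed



lemma delta_lower:
  fixes q \<beta> h :: real
  assumes q: "q \<ge> 1" and b: "\<beta> > -1/(2*q)" and h: "0 < h"
    and hN: "(2::real)^N * (4*h^2) \<le> 1"
  defines "c1 \<equiv> (min (2 powr (-\<beta>)) (2 powr \<beta>) * (1 - 2 powr (-(\<beta> + 1/(2*q))))) powr q"
  shows "ennreal (real N * (c1 * (h / (2 * sqrt 2))))
    \<le> (\<integral>\<^sup>+ x. indicator {-1 + 2*h^2 .. 1 - 2*h^2} x *
          ennreal (\<bar>wbb \<beta> x * Delta1 (h * phi x) (G (\<beta> + 1/(2*q)) N) x\<bar> powr q) \<partial>lborel)"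
proof -
  define \<alpha> where "\<alpha> = \<beta> + 1/(2*q)"
  define I where "I k = {tj k ..< tj k + ell h k}" for k
  define L where "L x = (\<Sum>k\<in>{1..N}. ennreal (sqrt (2^k) * c1) * indicator (I k) x)" for x
  have c10: "c1 \<ge> 0" unfolding c1_def by simp
  have hk: "(2::real)^k * (4*h^2) \<le> 1" if "k \<le> N" for k
  proof -
    have "(2::real)^k \<le> 2^N" using that by (intro power_increasing) auto
    then have "(2::real)^k * (4*h^2) \<le> 2^N * (4*h^2)" by (intro mult_right_mono) auto
    then show ?thesis using hN by linarith
  qed
  have ell0: "ell h k \<ge> 0" for k unfolding ell_def using h by simp
  have tm: "sqrt (2^k) * ell h k = h / (2 * sqrt 2)" for k :: nat
  proof -
    have "sqrt (2^k) * ell h k = h/2 * (sqrt (2^k) * sqrt (1/2^(k+1)))" unfolding ell_def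
      by (simp add: algebra_simps)
    also have "sqrt (2^k) * sqrt (1/2^(k+1)) = sqrt (2^k * (1/2^(k+1)))"
      by (rule real_sqrt_mult[symmetric])
    also have "(2::real)^k * (1/2^(k+1)) = 1/2" by simp
    finally show ?thesis by (simp add: real_sqrt_divide)
  qed
  have "(\<integral>\<^sup>+ x. L x \<partial>lborel) = (\<Sum>k\<in>{1..N}. ennreal (sqrt (2^k) * c1) * emeasure lborel (I k))"
    unfolding L_def I_def
    by (subst nn_integral_sum) (auto simp: nn_integral_cmult_indicator)
  also have "\<dots> = (\<Sum>k\<in>{1..N}. ennreal (c1 * (h / (2 * sqrt 2))))"
  proof (rule sum.cong[OF refl])
    fix k assume "k \<in> {1..N}"
    have "ennreal (sqrt (2^k) * c1) * emeasure lborel (I k) = ennreal (sqrt (2^k) * c1 * ell h k)"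
      unfolding I_def using ell0[of k] c10 by (simp add: ennreal_mult)
    also have "sqrt (2^k) * c1 * ell h k = c1 * (h / (2 * sqrt 2))"
      using tm[of k] by (simp add: algebra_simps)
    finally show "ennreal (sqrt (2^k) * c1) * emeasure lborel (I k) = ennreal (c1 * (h / (2 * sqrt 2)))" .
  qed
  also have "\<dots> = ennreal (real N * (c1 * (h / (2 * sqrt 2))))"
  proof -
    have "(\<Sum>k\<in>{1..N}. ennreal (c1 * (h / (2 * sqrt 2)))) = of_nat N * ennreal (c1 * (h / (2 * sqrt 2)))"
      by simp
    also have "\<dots> = ennreal (real N) * ennreal (c1 * (h / (2 * sqrt 2)))"
      by (simp add: ennreal_of_nat_eq_real_of_nat)
    also have "\<dots> = ennreal (real N * (c1 * (h / (2 * sqrt 2))))"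
      by (rule ennreal_mult[symmetric]) (use c10 h in auto)
    finally show ?thesis .
  qed
  finally have LI: "(\<integral>\<^sup>+ x. L x \<partial>lborel) = ennreal (real N * (c1 * (h / (2 * sqrt 2))))" .
  have "(\<integral>\<^sup>+ x. L x \<partial>lborel) \<le> (\<integral>\<^sup>+ x. indicator {-1 + 2*h^2 .. 1 - 2*h^2} x *
          ennreal (\<bar>wbb \<beta> x * Delta1 (h * phi x) (G \<alpha> N) x\<bar> powr q) \<partial>lborel)"
  proof (rule nn_integral_mono)
    fix x :: real
    show "L x \<le> indicator {-1 + 2*h^2 .. 1 - 2*h^2} x *
          ennreal (\<bar>wbb \<beta> x * Delta1 (h * phi x) (G \<alpha> N) x\<bar> powr q)"
    proof (cases "\<exists>k\<in>{1..N}. x \<in> I k")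
      case True
      then obtain k where k: "k \<in> {1..N}" "x \<in> I k" by blast
      have xk: "tj k \<le> x" "x < tj k + ell h k" using k unfolding I_def by auto
      have "L x = ennreal (sqrt (2^k) * c1) * indicator (I k) x +
           (\<Sum>j\<in>{1..N} - {k}. ennreal (sqrt (2^j) * c1) * indicator (I j) x)"
        unfolding L_def using k by (subst sum.remove[of _ k]) auto
      also have "(\<Sum>j\<in>{1..N} - {k}. ennreal (sqrt (2^j) * c1) * indicator (I j) x) = 0"
      proof (rule sum.neutral, rule ballI)
        fix j assume j: "j \<in> {1..N} - {k}"
        have "x \<notin> I j" using windows_disj[OF h hk[of j] hk[of k] _ xk] j k unfolding I_def by auto
        then show "ennreal (sqrt (2^j) * c1) * indicator (I j) x = 0" by simp
      qed
      finally have Lx: "L x = ennreal (sqrt (2^k) * c1)" using k by simp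
      have "sqrt (2^k) * c1 \<le> \<bar>wbb \<beta> x * Delta1 (h * phi x) (G \<alpha> N) x\<bar> powr q"
        unfolding c1_def \<alpha>_def using val_bound[OF q b h _ _ hk[of k] xk] k by auto
      moreover have "x \<in> {-1 + 2*h^2 .. 1 - 2*h^2}" using window(1)[OF h _ hk[of k] xk] k by auto
      ultimately show ?thesis unfolding Lx by (auto intro: ennreal_leI)
    next
      case False
      then have "L x = 0" unfolding L_def by (intro sum.neutral) auto
      then show ?thesis by simp
    qed
  qed
  then show ?thesis unfolding LI \<alpha>_def .
qed

lemma delta_finite:
  fixes q \<beta> h :: real
  assumes q: "q \<ge> 1" and b: "\<beta> > -1/(2*q)" and h: "0 < h" "h < 1/2"
  shows "(\<integral>\<^sup>+ x. indicator {-1 + 2*h^2 .. 1 - 2*h^2} x *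
          ennreal (\<bar>wbb \<beta> x * Delta1 (h * phi x) (G (\<beta> + 1/(2*q)) N) x\<bar> powr q) \<partial>lborel) < \<infinity>"
proof -
  define \<alpha> where "\<alpha> = \<beta> + 1/(2*q)"
  have al: "\<alpha> > 0" unfolding \<alpha>_def using b by simp
  define B where "B = (max ((2*h^2) powr \<beta>) (1 powr \<beta>) * (2^N) powr \<alpha>) powr q"
  define S where "S = {-1 + 2*h^2 .. 1 - 2*h^2}"
  have "(\<integral>\<^sup>+ x. indicator S x * ennreal (\<bar>wbb \<beta> x * Delta1 (h * phi x) (G \<alpha> N) x\<bar> powr q) \<partial>lborel)
      \<le> (\<integral>\<^sup>+ x. ennreal B * indicator S x \<partial>lborel)"
  proof (rule nn_integral_mono)
    fix x
    show "indicator S x * ennreal (\<bar>wbb \<beta> x * Delta1 (h * phi x) (G \<alpha> N) x\<bar> powr q) \<le> ennreal B * indicator S x"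
    proof (cases "x \<in> S")
      case True
      then have ax: "\<bar>x\<bar> \<le> 1 - 2*h^2" unfolding S_def by auto
      have e1: "1 - x^2 = (1 - \<bar>x\<bar>) * (1 + \<bar>x\<bar>)" by (simp add: power2_eq_square algebra_simps)
      moreover have hx: "2*h^2 \<le> 1 - \<bar>x\<bar>" using ax by simp
      moreover have m1: "(1 - \<bar>x\<bar>) * 1 \<le> (1 - \<bar>x\<bar>) * (1 + \<bar>x\<bar>)"
      proof (rule mult_left_mono)
        show "0 \<le> 1 - \<bar>x\<bar>" using hx zero_le_power2[of h] by linarith
      qed simp
      ultimately have "2*h^2 * 1 \<le> 1 - x^2" unfolding e1 using hx m1 by simp
      moreover have "1 - x^2 \<le> 1" by simp
      moreover have "0 < 2*h^2" using h by simp
      ultimately have w: "wbb \<beta> x \<le> max ((2*h^2) powr \<beta>) (1 powr \<beta>)"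
        unfolding wbb_def by (intro powr_between(2)) auto
      have w0: "wbb \<beta> x \<ge> 0" unfolding wbb_def by simp
      have g: "0 \<le> G \<alpha> N y" "G \<alpha> N y \<le> (2^N) powr \<alpha>" for y
        using G_nonneg[OF al] G_le_max[OF al] by auto
      have d: "\<bar>Delta1 (h * phi x) (G \<alpha> N) x\<bar> \<le> (2^N) powr \<alpha>"
      proof -
        have "\<bar>G \<alpha> N a - G \<alpha> N b\<bar> \<le> (2^N) powr \<alpha>" for a b
          unfolding abs_le_iff using g[of a] g[of b] by linarith
        moreover have "0 \<le> ((2::real)^N) powr \<alpha>" by simp
        ultimately show ?thesis unfolding Delta1_def by auto
      qed
      have "\<bar>wbb \<beta> x * Delta1 (h * phi x) (G \<alpha> N) x\<bar> \<le> max ((2*h^2) powr \<beta>) (1 powr \<beta>) * (2^N) powr \<alpha>"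
        unfolding abs_mult using w w0 d by (intro mult_mono) auto
      then have "\<bar>wbb \<beta> x * Delta1 (h * phi x) (G \<alpha> N) x\<bar> powr q \<le> B"
        unfolding B_def using q by (intro powr_mono2) auto
      then show ?thesis using True by (auto intro: ennreal_leI)
    qed simp
  qed
  also have "\<dots> = ennreal B * emeasure lborel S"
    unfolding S_def by (rule nn_integral_cmult_indicator) simp
  also have "\<dots> < \<infinity>" unfolding S_def emeasure_lborel_Icc_eq by (simp add: ennreal_mult_less_top del: ennreal_eq_0_iff)
  finally show ?thesis unfolding S_def \<alpha>_def .
qed



lemma choose_N:
  fixes \<delta> :: real
  assumes d: "0 < \<delta>" "\<delta> < 1/4"
  obtains N :: nat where "1 \<le> N" "(2::real)^N * (4*\<delta>^2) \<le> 1"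
    "\<bar>ln \<delta>\<bar> / (2 * ln 2) \<le> real N"
proof -
  define y where "y = 1/(4*\<delta>^2)"
  have y0: "y > 0" unfolding y_def using d by simp
  define k where "k = \<lfloor>log 2 y\<rfloor>"
  have kk: "2 powr (real_of_int k) \<le> y" "y < 2 powr (real_of_int k + 1)"
    using floor_log_eq_powr_iff[OF y0, of 2 k] unfolding k_def by auto
  have l2: "ln 2 \<ge> (2/3::real)" by (rule ln2_ge_two_thirds)
  have lny: "ln y = 2 * (- ln \<delta>) - 2 * ln 2"
  proof -
    have "ln y = - ln (4 * \<delta>^2)" unfolding y_def using d by (simp add: ln_div)
    also have "ln (4 * \<delta>^2) = ln 4 + 2 * ln \<delta>" using d by (simp add: ln_mult ln_realpow)
    also have "ln (4::real) = 2 * ln 2" using ln_realpow[of 2 2] by simp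
    finally show ?thesis by simp
  qed
  have ld: "- ln \<delta> > 2 * ln 2"
  proof -
    have "ln \<delta> < ln (1/4)" using d by simp
    also have "ln (1/4::real) = - (2 * ln 2)" using ln_realpow[of 2 2] by (simp add: ln_div)
    finally show ?thesis by simp
  qed
  have "ln y < (real_of_int k + 1) * ln 2"
  proof -
    have "ln y < ln (2 powr (real_of_int k + 1))" using kk(2) y0 by (subst ln_less_cancel_iff) auto
    moreover have "ln ((2::real) powr (real_of_int k + 1)) = (real_of_int k + 1) * ln 2" by (rule ln_powr)
    ultimately show ?thesis by simp
  qed
  then have kl: "real_of_int k + 1 > (2 * (- ln \<delta>) - 2 * ln 2) / ln 2"
    using l2 lny by (simp add: divide_simps)
  have "(2 * (- ln \<delta>) - 2 * ln 2) / ln 2 = 2 * ((- ln \<delta>) / ln 2) - 2" using l2 by (simp add: divide_simps)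
  moreover have L2: "(- ln \<delta>) / ln 2 > 2" using ld l2 by (simp add: divide_simps)
  ultimately have kl2: "real_of_int k > 2 * ((- ln \<delta>) / ln 2) - 3" using kl by linarith
  then have k0: "k \<ge> 1" using L2 by linarith
  define N where "N = nat k"
  have Nk: "real N = real_of_int k" unfolding N_def using k0 by simp
  show ?thesis
  proof
    show "1 \<le> N" unfolding N_def using k0 by simp
    have "(2::real)^N = 2 powr (real N)" by (simp add: powr_realpow)
    then have "(2::real)^N \<le> y" using kk(1) Nk by simp
    then show "(2::real)^N * (4*\<delta>^2) \<le> 1" unfolding y_def using d by (simp add: divide_simps)
    have "\<bar>ln \<delta>\<bar> = - ln \<delta>" using ld l2 by simp
    moreover have "(- ln \<delta>) / (2 * ln 2) = ((- ln \<delta>) / ln 2) / 2" by simp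
    ultimately show "\<bar>ln \<delta>\<bar> / (2 * ln 2) \<le> real N" using kl2 L2 Nk by linarith
  qed
qed

lemma lnln_lower:
  fixes \<delta> :: real
  assumes d: "0 < \<delta>" "\<delta> < 1/4"
  shows "ln (ln (4::real)) > 0" "ln (ln (4::real)) \<le> \<bar>ln \<bar>ln \<delta>\<bar>\<bar>"
proof -
  have l2: "ln 2 \<ge> (2/3::real)" by (rule ln2_ge_two_thirds)
  have l4: "ln (4::real) = 2 * ln 2" using ln_realpow[of 2 2] by simp
  have l41: "ln (4::real) > 1" using l2 l4 by simp
  then show "ln (ln (4::real)) > 0" by simp
  have "ln \<delta> < ln (1/4)" using d by simp
  also have "ln (1/4::real) = - ln 4" by (simp add: ln_div)
  finally have "\<bar>ln \<delta>\<bar> > ln 4" using l41 by simp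
  then have "ln (ln 4) \<le> ln \<bar>ln \<delta>\<bar>" using l41 by simp
  then show "ln (ln 4) \<le> \<bar>ln \<bar>ln \<delta>\<bar>\<bar>" using \<open>ln (ln 4) > 0\<close> by linarith
qed



theorem lemma6p8:
  fixes q p \<beta> lam :: real
  assumes "1 \<le> q" and "p = 2 * q" and "\<beta> > - 1 / p" and "lam > 1"
  shows "\<exists>c>0. \<forall>\<delta>. 0 < \<delta> \<and> \<delta> < 1 / 4 \<longrightarrow>
           (\<exists>f \<in> Bsphere p \<beta> \<inter> Mplus1.
              Omega1 q (wbb \<beta>) f \<delta> \<ge>
                ereal (c * (\<delta> powr (1 / q) * \<bar>ln \<delta>\<bar> powr (1 / (2 * q))
                        / \<bar>ln \<bar>ln \<delta>\<bar>\<bar> powr (lam / (2 * q)))))"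
proof -
  have q: "q \<ge> 1" using assms(1) .
  have qp: "q > 0" using q by simp
  have b: "\<beta> > -1/(2*q)" using assms(2,3) by simp
  define \<alpha> where "\<alpha> = \<beta> + 1/(2*q)"
  have al: "\<alpha> > 0" unfolding \<alpha>_def using b by simp
  define c1 where "c1 = (min (2 powr (-\<beta>)) (2 powr \<beta>) * (1 - 2 powr (-(\<beta> + 1/(2*q))))) powr q"
  have e0: "1 - 2 powr (-(\<beta> + 1/(2*q))) > 0" using al unfolding \<alpha>_def by (simp add: powr_minus divide_simps)
  have "min (2 powr (-\<beta>)) (2 powr \<beta>) * (1 - 2 powr (-(\<beta> + 1/(2*q)))) > (0::real)"
    using e0 by (intro mult_pos_pos) auto
  then have "min (2 powr (-\<beta>)) (2 powr \<beta>) * (1 - 2 powr (-(\<beta> + 1/(2*q)))) \<noteq> (0::real)" by linarith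
  then have c1p: "c1 > 0" unfolding c1_def by (simp only: powr_gt_zero not_False_eq_True)
  define K where "K = max 1 (2 powr (2*q*\<beta>))"
  have ga: "2*q*\<beta> + 1 > 0" using b qp by (simp add: divide_simps mult.commute)
  define Cn where "Cn = K * (ln 2 + 1/(2*q*\<beta>+1))"
  have Cnp: "Cn > 0" unfolding Cn_def K_def using ga by (simp add: add_pos_pos)
  define P0 where "P0 = ((min ((1/4) powr \<beta>) 1 * dj (\<beta> + 1/(2*q)) 1) powr (2*q)) * (1/4)"
  have dj1: "dj \<alpha> 1 > 0" unfolding dj_def using al by simp
  have "min ((1/4) powr \<beta>) 1 > (0::real)" by (simp add: min_def)
  then have "min ((1/4) powr \<beta>) 1 * dj (\<beta> + 1/(2*q)) 1 > 0" using dj1 unfolding \<alpha>_def by simp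
  then have "min ((1/4) powr \<beta>) 1 * dj (\<beta> + 1/(2*q)) 1 \<noteq> (0::real)" by linarith
  then have "(min ((1/4) powr \<beta>) 1 * dj (\<beta> + 1/(2*q)) 1) powr (2*q) > 0"
    by (simp only: powr_gt_zero not_False_eq_True)
  then have P0p: "P0 > 0" unfolding P0_def by simp
  define D0 where "D0 = ln (ln (4::real)) powr (lam/(2*q))"
  have D0p: "D0 > 0" unfolding D0_def using lnln_lower(1)[of "1/8"] by simp
  define A where "A = (c1/(2* sqrt 2)) powr (1/q) / Cn powr (1/(2*q))"
  have Ap: "A > 0" unfolding A_def using c1p Cnp by simp
  define c where "c = A * (1/(2*ln 2)) powr (1/(2*q)) * D0"
  have cp: "c > 0" unfolding c_def using Ap D0p by simp
  show ?thesis
  proof (intro exI[of _ c] conjI allI impI cp)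
    fix \<delta> :: real assume d: "0 < \<delta> \<and> \<delta> < 1/4"
    then have d1: "0 < \<delta>" and d2: "\<delta> < 1/4" by auto
    obtain N where N1: "1 \<le> N" and hN: "(2::real)^N * (4*\<delta>^2) \<le> 1"
      and NL: "\<bar>ln \<delta>\<bar> / (2 * ln 2) \<le> real N"
      using choose_N[OF d1 d2] by blast
    define g where "g = G \<alpha> N"
    define IN where "IN = (\<integral>\<^sup>+ x. indicator {-1..1} x * ennreal (\<bar>wbb \<beta> x * g x\<bar> powr (2*q)) \<partial>lborel)"
    have INu: "IN \<le> ennreal (K * ((real N - 1) * ln 2 + 1/(2*q*\<beta>+1)))"
      unfolding IN_def g_def \<alpha>_def K_def using norm_upper[OF q b N1] .
    have INl: "IN \<ge> ennreal P0"
      unfolding IN_def g_def \<alpha>_def P0_def using norm_pos[OF q b N1] .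
    have K1: "K \<ge> 1" unfolding K_def by simp
    have "K * ((real N - 1) * ln 2 + 1/(2*q*\<beta>+1)) \<le> K * (real N * ln 2 + real N * (1/(2*q*\<beta>+1)))"
      using K1 N1 ga ln_gt_zero[of 2] by (intro mult_left_mono add_mono mult_right_mono) (auto simp: divide_simps)
    also have "\<dots> = Cn * real N" unfolding Cn_def by (simp add: algebra_simps)
    finally have KC: "K * ((real N - 1) * ln 2 + 1/(2*q*\<beta>+1)) \<le> Cn * real N" .
    have INr: "P0 \<le> enn2real IN" "enn2real IN \<le> Cn * real N"
    proof -
      have fin: "IN < \<infinity>" using INu by (simp add: le_less_trans)
      have "enn2real (ennreal P0) \<le> enn2real IN" by (rule enn2real_mono[OF INl fin[unfolded infinity_ennreal_def]])
      then show "P0 \<le> enn2real IN" using P0p by simp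
      have nn: "0 \<le> K * ((real N - 1) * ln 2 + 1/(2*q*\<beta>+1))"
        using K1 N1 ga by (intro mult_nonneg_nonneg add_nonneg_nonneg) auto
      have "enn2real IN \<le> enn2real (ennreal (K * ((real N - 1) * ln 2 + 1/(2*q*\<beta>+1))))"
        by (rule enn2real_mono[OF INu]) simp
      then have "enn2real IN \<le> K * ((real N - 1) * ln 2 + 1/(2*q*\<beta>+1))"
        using nn by simp
      then show "enn2real IN \<le> Cn * real N" using KC by linarith
    qed
    define M where "M = Lq_norm (2*q) {-1..1} (\<lambda>x. wbb \<beta> x * g x)"
    have MI: "M = enn2real IN powr (1/(2*q))" unfolding M_def Lq_norm_def IN_def ..
    have Mp: "M > 0" unfolding MI using INr(1) P0p by simp
    have Mu: "M \<le> (Cn * real N) powr (1/(2*q))" unfolding MI using INr P0p qp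
      by (intro powr_mono2) auto
    define f where "f = (\<lambda>x. g x / M)"
    have gmeas[measurable]: "g \<in> borel_measurable borel" unfolding g_def by measurable
    have "f \<in> Bsphere p \<beta>"
    proof -
      have "Lq_norm p {-1..1} (\<lambda>x. wbb \<beta> x * f x) = Lq_norm (2*q) {-1..1} (\<lambda>x. (wbb \<beta> x * g x) / M)"
        unfolding f_def assms(2) by simp
      also have "\<dots> = M / M" unfolding M_def
        by (rule Lq_norm_div) (use Mp[unfolded M_def] qp in auto)
      also have "\<dots> = 1" using Mp by simp
      finally show ?thesis unfolding Bsphere_def by simp
    qed
    moreover have "f \<in> Mplus1"
      unfolding Mplus1_def f_def g_def
    proof (intro CollectI conjI ballI)
      show "mono_on {-1<..<1} (\<lambda>x. G \<alpha> N x / M)"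
        using G_mono[OF al] Mp by (auto intro!: mono_onI divide_right_mono)
      fix x :: real assume "x \<in> {-1<..0}"
      then show "G \<alpha> N x / M = 0" by (simp add: G_zero)
    qed
    moreover have "Omega1 q (wbb \<beta>) f \<delta> \<ge>
                ereal (c * (\<delta> powr (1 / q) * \<bar>ln \<delta>\<bar> powr (1 / (2 * q))
                        / \<bar>ln \<bar>ln \<delta>\<bar>\<bar> powr (lam / (2 * q))))"
    proof -
      define S where "S = {-1 + 2*\<delta>^2 .. 1 - 2*\<delta>^2}"
      define ID where "ID = (\<integral>\<^sup>+ x. indicator S x *
          ennreal (\<bar>wbb \<beta> x * Delta1 (\<delta> * phi x) g x\<bar> powr q) \<partial>lborel)"
      have IDl: "ennreal (real N * (c1 * (\<delta> / (2 * sqrt 2)))) \<le> ID"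
        unfolding ID_def S_def g_def \<alpha>_def c1_def using delta_lower[OF q b d1 hN] .
      have IDf: "ID < \<infinity>"
        unfolding ID_def S_def g_def \<alpha>_def using delta_finite[OF q b d1] d2 by simp
      define X where "X = real N * (c1 * (\<delta> / (2 * sqrt 2)))"
      have X0: "X \<ge> 0" unfolding X_def using c1p d1 by simp
      have "enn2real (ennreal X) \<le> enn2real ID"
        by (rule enn2real_mono[OF IDl[folded X_def] IDf[unfolded infinity_ennreal_def]])
      then have IDr: "X \<le> enn2real ID" using X0 by simp
      define LD where "LD = Lq_norm q S (\<lambda>x. wbb \<beta> x * Delta1 (\<delta> * phi x) g x)"
      have LDI: "LD = enn2real ID powr (1/q)" unfolding LD_def Lq_norm_def ID_def ..
      have LDl: "X powr (1/q) \<le> LD" unfolding LDI using IDr X0 qp by (intro powr_mono2) auto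
      have "Omega1 q (wbb \<beta>) f \<delta> \<ge> ereal (Lq_norm q S (\<lambda>x. wbb \<beta> x * Delta1 (\<delta> * phi x) f x))"
        unfolding Omega1_def S_def using d1 by (intro SUP_upper) auto
      also have "Lq_norm q S (\<lambda>x. wbb \<beta> x * Delta1 (\<delta> * phi x) f x) = LD / M"
      proof -
        have "Lq_norm q S (\<lambda>x. wbb \<beta> x * Delta1 (\<delta> * phi x) f x)
            = Lq_norm q S (\<lambda>x. (wbb \<beta> x * Delta1 (\<delta> * phi x) g x) / M)"
          unfolding f_def Delta1_div by simp
        also have "\<dots> = LD / M" unfolding LD_def
          by (rule Lq_norm_div) (use Mp qp in \<open>auto simp: S_def\<close>)
        finally show ?thesis .
      qed
      finally have Om: "Omega1 q (wbb \<beta>) f \<delta> \<ge> ereal (LD / M)" .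
      define T where "T = \<delta> powr (1 / q) * \<bar>ln \<delta>\<bar> powr (1 / (2 * q))"
      define Dd where "Dd = \<bar>ln \<bar>ln \<delta>\<bar>\<bar> powr (lam / (2 * q))"
      have T0: "T \<ge> 0" unfolding T_def by simp
      have DdD: "D0 \<le> Dd" unfolding D0_def Dd_def
        using lnln_lower[OF d1 d2] assms(4) qp by (intro powr_mono2) auto
      have "c * (T / Dd) \<le> c * (T / D0)"
        using cp T0 D0p DdD by (intro mult_left_mono divide_left_mono) auto
      also have "c * (T / D0) = A * (\<delta> powr (1/q) * ((1/(2*ln 2)) * \<bar>ln \<delta>\<bar>) powr (1/(2*q)))"
      proof -
        have pm: "(1/(2*ln 2)) powr (1/(2*q)) * \<bar>ln \<delta>\<bar> powr (1/(2*q)) = (\<bar>ln \<delta>\<bar> / (2*ln 2)) powr (1/(2*q))"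
          using powr_mult[of "1/(2*ln 2)" "\<bar>ln \<delta>\<bar>" "1/(2*q)"] ln_gt_zero[of 2] by simp
        show ?thesis unfolding c_def T_def using D0p pm by (simp add: powr_mult)
      qed
      also have "\<dots> \<le> A * (\<delta> powr (1/q) * real N powr (1/(2*q)))"
        using NL Ap qp by (intro mult_left_mono powr_mono2) auto
      also have "\<dots> = X powr (1/q) / (Cn * real N) powr (1/(2*q))"
      proof -
        have NN: "real N powr (1/q) = real N powr (1/(2*q)) * real N powr (1/(2*q))"
          by (simp add: powr_add[symmetric])
        have "X powr (1/q) = real N powr (1/q) * (c1/(2* sqrt 2)) powr (1/q) * \<delta> powr (1/q)"
          unfolding X_def using c1p d1 by (simp add: powr_mult[symmetric] algebra_simps)
        moreover have "(Cn * real N) powr (1/(2*q)) = Cn powr (1/(2*q)) * real N powr (1/(2*q))"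
          using Cnp by (simp add: powr_mult)
        moreover have "real N powr (1/(2*q)) > 0" using N1 by simp
        ultimately show ?thesis unfolding A_def NN using Cnp by (simp add: divide_simps)
      qed
      also have "\<dots> \<le> LD / M"
      proof -
        have "X powr (1/q) / (Cn * real N) powr (1/(2*q)) \<le> X powr (1/q) / M"
        proof (rule divide_left_mono)
          show "0 < (Cn * real N) powr (1/(2*q)) * M" using Mp Mu N1 by (intro mult_pos_pos) auto
        qed (use Mu in auto)
        also have "\<dots> \<le> LD / M" using LDl Mp by (intro divide_right_mono) auto
        finally show ?thesis .
      qed
      finally have "c * (T / Dd) \<le> LD / M" .
      then show ?thesis using Om unfolding T_def Dd_def by (meson ereal_less_eq(3) order.trans)
    qed
    ultimately show "\<exists>f \<in> Bsphere p \<beta> \<inter> Mplus1.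
              Omega1 q (wbb \<beta>) f \<delta> \<ge>
                ereal (c * (\<delta> powr (1 / q) * \<bar>ln \<delta>\<bar> powr (1 / (2 * q))
                        / \<bar>ln \<bar>ln \<delta>\<bar>\<bar> powr (lam / (2 * q))))" by blast
  qed
qed


end
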